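(* Let $\mathcal I=\mathbb R^d$ with the standard inner product, let $\mathcal G$ be a compact Abelian group with normalized Haar measure $dg$, acting on $\mathcal I$ by a unitary representation $I\mapsto gI$. Let $\mathcal T=\mathcal S$ be the unit sphere of $\mathcal I$. For $I\in\mathcal I$ let $\rho_I$ be the law of the random variable $g\mapsto gI$ on $(\mathcal G,dg)$, i.e. $\rho_I(A)=\int_{\{g:\,gI\in A\}}dg$. For $t\in\mathcal T$ and a probability measure $\rho$ on $\mathcal I$, let $\rho^t$ be the probability measure on $\mathbb R$ given by $\rho^t(B)=\rho(\pi_t^{-1}(B))$, where $\pi_t(I)=\langle I,t\rangle$. Define the Tomographic Probabilistic representation $\Psi$, mapping each $I\in\mathcal I$ to the function $\mathcal T\to\mathcal P(\mathbb R)$ given by $\Psi(I)(t)=(\rho_I)^t$. Then for all $I,I'\in\mathcal I$, $$I\sim I'\iff \Psi(I)=\Psi(I').$$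
   Context: $\mathcal P(\mathbb R)$ denotes the set of Borel probability measures on $\mathbb R$. $I\sim I'$ means there exists $g\in\mathcal G$ with $gI=I'$. *)

theory Defs
  imports "HOL-Analysis.Analysis" "HOL-Probability.Probability" "HOL-Library.FuncSet"
begin

definition normalized_haar :: "('g::{topological_ab_group_add,t2_space}) measure \<Rightarrow> bool" where
  "normalized_haar \<mu> \<longleftrightarrow> prob_space \<mu> \<and> sets \<mu> = sets borel \<and>
     (\<forall>g. \<forall>A\<in>sets borel. emeasure \<mu> ((\<lambda>h. g + h) ` A) = emeasure \<mu> A)"

definition unitary_rep :: "('g::{topological_ab_group_add,t2_space} \<Rightarrow> real^'d \<Rightarrow> real^'d) \<Rightarrow> bool" where
  "unitary_rep act \<longleftrightarrow>
     (\<forall>g. orthogonal_transformation (act g)) \<and>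
     act 0 = id \<and>
     (\<forall>g h. act (g + h) = act g \<circ> act h) \<and>
     (\<forall>v. continuous_on UNIV (\<lambda>g. act g v))"

definition orbit_equiv :: "('g \<Rightarrow> real^'d \<Rightarrow> real^'d) \<Rightarrow> real^'d \<Rightarrow> real^'d \<Rightarrow> bool" where
  "orbit_equiv act I I' \<longleftrightarrow> (\<exists>g. act g I = I')"

definition orbit_law :: "'g measure \<Rightarrow> ('g \<Rightarrow> real^'d \<Rightarrow> real^'d) \<Rightarrow> real^'d \<Rightarrow> (real^'d) measure" where
  "orbit_law \<mu> act I = distr \<mu> borel (\<lambda>g. act g I)"

definition tomo_proj :: "real^'d \<Rightarrow> (real^'d) measure \<Rightarrow> real measure" where
  "tomo_proj t \<rho> = distr \<rho> borel (\<lambda>x. x \<bullet> t)"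

definition Psi :: "'g measure \<Rightarrow> ('g \<Rightarrow> real^'d \<Rightarrow> real^'d) \<Rightarrow> real^'d \<Rightarrow> real^'d \<Rightarrow> real measure" where
  "Psi \<mu> act I = (\<lambda>t\<in>sphere 0 1. tomo_proj t (orbit_law \<mu> act I))"

end

theory Submission
  imports Defs
begin

lemma haar_space:
  assumes "normalized_haar \<mu>"
  shows "space \<mu> = UNIV" "sets \<mu> = sets borel" "prob_space \<mu>"
  using assms unfolding normalized_haar_def
  by (auto dest: sets_eq_imp_space_eq)

lemma transl_img:
  "(\<lambda>h. (g::'a::ab_group_add) + h) ` S = {x. x - g \<in> S}"
proof safe
  fix h assume "h \<in> S" then show "g + h - g \<in> S" by simp
next
  fix x assume "x - g \<in> S"
  then show "x \<in> (\<lambda>h. g + h) ` S" by (intro image_eqI[of _ _ "x - g"]) simp_all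
qed

lemma haar_open_pos:
  fixes \<mu> :: "('g::{topological_ab_group_add,t2_space}) measure"
  assumes cpt: "compact (UNIV :: 'g set)" and H: "normalized_haar \<mu>"
    and U: "open U" "U \<noteq> {}"
  shows "emeasure \<mu> U \<noteq> 0"
proof
  assume U0: "emeasure \<mu> U = 0"
  have sp: "space \<mu> = UNIV" and se: "sets \<mu> = sets borel" and ps: "prob_space \<mu>"
    using haar_space[OF H] by auto
  have inv: "\<And>g. emeasure \<mu> ((\<lambda>h. g + h) ` U) = 0"
  proof -
    fix g
    have Ub: "U \<in> sets borel" using U(1) by simp
    have "emeasure \<mu> ((\<lambda>h. g + h) ` U) = emeasure \<mu> U"
      using H Ub unfolding normalized_haar_def by blast
    then show "emeasure \<mu> ((\<lambda>h. g + h) ` U) = 0" using U0 by simp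
  qed
  have img: "\<And>g. (\<lambda>h. g + h) ` U = (\<lambda>h. h - g) -` U"
    unfolding transl_img vimage_def ..
  have opn: "\<And>g. open ((\<lambda>h. g + h) ` U)"
  proof -
    fix g
    have "continuous_on UNIV (\<lambda>h::'g. h - g)" by (intro continuous_intros)
    then have "open ((\<lambda>h. h - g) -` U \<inter> UNIV)"
      using continuous_on_open_vimage[of UNIV "\<lambda>h::'g. h - g", THEN iffD1, OF open_UNIV] U(1) by blast
    then show "open ((\<lambda>h. g + h) ` U)" using img by simp
  qed
  obtain u where u: "u \<in> U" using U by auto
  have cov: "UNIV \<subseteq> (\<Union>g\<in>UNIV. (\<lambda>h. g + h) ` U)"
  proof
    fix x :: 'g
    have "x = (x - u) + u" by simp
    then show "x \<in> (\<Union>g\<in>UNIV. (\<lambda>h. g + h) ` U)" using u by blast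
  qed
  obtain F where F: "finite F" "UNIV \<subseteq> (\<Union>g\<in>F. (\<lambda>h. g + h) ` U)"
  proof (rule compactE_image[OF cpt _ cov])
    fix T :: 'g show "open ((\<lambda>h. T + h) ` U)" by (rule opn)
  next
    fix C' assume "C' \<subseteq> UNIV" "finite C'" "UNIV \<subseteq> (\<Union>c\<in>C'. (\<lambda>h. c + h) ` U)"
    then show thesis using that by blast
  qed
  have Uall: "(\<Union>g\<in>F. (\<lambda>h. g + h) ` U) = UNIV" using F(2) by blast
  have "emeasure \<mu> UNIV = emeasure \<mu> (\<Union>g\<in>F. (\<lambda>h. g + h) ` U)"
    by (simp only: Uall)
  also have "\<dots> \<le> (\<Sum>g\<in>F. emeasure \<mu> ((\<lambda>h. g + h) ` U))"
  proof (rule emeasure_subadditive_finite[OF F(1)])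
    have "\<And>g. (\<lambda>h. g + h) ` U \<in> sets borel" using opn by (rule borel_open)
    then show "(\<lambda>g. (\<lambda>h. g + h) ` U) ` F \<subseteq> sets \<mu>" unfolding se by blast
  qed
  also have "\<dots> = 0" using inv by simp
  finally have "emeasure \<mu> UNIV = 0" by simp
  moreover have "emeasure \<mu> UNIV = 1" using prob_space.emeasure_space_1[OF ps] sp by simp
  ultimately show False by simp
qed

lemma act_meas:
  fixes act :: "'g::{topological_ab_group_add,t2_space} \<Rightarrow> real^'d \<Rightarrow> real^'d"
  assumes H: "normalized_haar \<mu>" and A: "unitary_rep act"
  shows "(\<lambda>g. act g I) \<in> measurable \<mu> borel"
proof -
  have "(\<lambda>g. act g I) \<in> borel_measurable borel"
    using A unfolding unitary_rep_def by (intro borel_measurable_continuous_onI) auto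
  then show ?thesis using haar_space[OF H] measurable_cong_sets by blast
qed

lemma tomo_emeasure:
  fixes act :: "'g::{topological_ab_group_add,t2_space} \<Rightarrow> real^'d \<Rightarrow> real^'d"
  assumes H: "normalized_haar \<mu>" and A: "unitary_rep act" and B: "B \<in> sets borel"
  shows "emeasure (tomo_proj t (orbit_law \<mu> act I)) B = emeasure \<mu> {g. act g I \<bullet> t \<in> B}"
proof -
  have m1: "(\<lambda>g. act g I) \<in> measurable \<mu> borel" by (rule act_meas[OF H A])
  have m2: "(\<lambda>x::real^'d. x \<bullet> t) \<in> measurable borel borel" by simp
  have "tomo_proj t (orbit_law \<mu> act I) = distr \<mu> borel (\<lambda>g. act g I \<bullet> t)"
    unfolding tomo_proj_def orbit_law_def using distr_distr[OF m2 m1] by (simp add: comp_def)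
  moreover have "(\<lambda>g. act g I \<bullet> t) \<in> measurable \<mu> borel" using m1 m2 by measurable
  ultimately show ?thesis using B haar_space[OF H] by (simp add: emeasure_distr vimage_def)
qed

lemma orbit_law_shift:
  fixes \<mu> :: "('g::{topological_ab_group_add,t2_space}) measure"
    and act :: "'g \<Rightarrow> real^'d \<Rightarrow> real^'d"
  assumes H: "normalized_haar \<mu>" and A: "unitary_rep act"
  shows "orbit_law \<mu> act (act g I) = orbit_law \<mu> act I"
proof -
  have sp: "space \<mu> = UNIV" and se: "sets \<mu> = sets borel"
    using haar_space[OF H] by auto
  have comp: "\<And>h. act h (act g I) = act (h + g) I"
    using A unfolding unitary_rep_def by simp
  show ?thesis unfolding orbit_law_def
  proof (rule measure_eqI)
    fix B assume "B \<in> sets (distr \<mu> borel (\<lambda>h. act h (act g I)))"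
    then have B: "B \<in> sets borel" by simp
    define S where "S = {h. act h I \<in> B}"
    have S: "S \<in> sets borel"
      using measurable_sets[OF act_meas[OF H A, of I] B] sp se unfolding S_def vimage_def by simp
    have eq: "{h. act (h + g) I \<in> B} = (\<lambda>h. (-g) + h) ` S"
      unfolding S_def transl_img by simp
    have "emeasure (distr \<mu> borel (\<lambda>h. act h (act g I))) B = emeasure \<mu> {h. act (h + g) I \<in> B}"
      using B act_meas[OF H A, of "act g I"] sp by (simp add: emeasure_distr vimage_def comp)
    also have "\<dots> = emeasure \<mu> S"
    proof -
      have "emeasure \<mu> ((\<lambda>h. (-g) + h) ` S) = emeasure \<mu> S"
        using H S unfolding normalized_haar_def by blast
      then show ?thesis by (simp only: eq)
    qed
    also have "\<dots> = emeasure (distr \<mu> borel (\<lambda>h. act h I)) B"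
      using B act_meas[OF H A, of I] sp by (simp add: emeasure_distr vimage_def S_def)
    finally show "emeasure (distr \<mu> borel (\<lambda>h. act h (act g I))) B = emeasure (distr \<mu> borel (\<lambda>h. act h I)) B" .
  qed simp
qed

lemma key:
  fixes \<mu> :: "('g::{topological_ab_group_add,t2_space}) measure"
    and act :: "'g \<Rightarrow> real^'d \<Rightarrow> real^'d"
  assumes cpt: "compact (UNIV :: 'g set)" and H: "normalized_haar \<mu>" and A: "unitary_rep act"
    and P: "Psi \<mu> act I = Psi \<mu> act I'" and nz: "I' \<noteq> 0"
  shows "\<exists>g. act g I \<bullet> I' \<ge> norm I' ^ 2"
proof -
  define c where "c = norm I'"
  define t where "t = (1 / c) *\<^sub>R I'"
  have c: "c > 0" using nz c_def by simp
  have t: "t \<in> sphere 0 1" using c unfolding t_def c_def by simp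
  have eqt: "tomo_proj t (orbit_law \<mu> act I) = tomo_proj t (orbit_law \<mu> act I')"
    using fun_cong[OF P, of t] t unfolding Psi_def by simp
  have cont: "\<And>J. continuous_on UNIV (\<lambda>g. act g J \<bullet> t)"
    using A unfolding unitary_rep_def by (intro continuous_intros) auto
  have I't: "I' \<bullet> t = c" using c unfolding t_def c_def by (simp add: power2_norm_eq_inner[symmetric] power2_eq_square)
  have act0: "act 0 = id" using A unfolding unitary_rep_def by simp
  have approx: "\<exists>g. act g I \<bullet> t > c - e" if e: "e > 0" for e
  proof -
    define U where "U = {g. act g I' \<bullet> t \<in> {c - e <..}}"
    have "open ((\<lambda>g. act g I' \<bullet> t) -` {c - e <..} \<inter> UNIV)"
      using continuous_on_open_vimage[of UNIV "\<lambda>g. act g I' \<bullet> t", THEN iffD1, OF open_UNIV cont[of I']]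
        open_greaterThan[of "c - e"] by blast
    then have "open U" unfolding U_def vimage_def by simp
    moreover have "0 \<in> U" unfolding U_def using act0 I't e by simp
    ultimately have "emeasure \<mu> U \<noteq> 0" using haar_open_pos[OF cpt H] by blast
    also have "emeasure \<mu> U = emeasure \<mu> {g. act g I \<bullet> t \<in> {c - e <..}}"
      unfolding U_def using tomo_emeasure[OF H A, of "{c - e <..}" t I] tomo_emeasure[OF H A, of "{c - e <..}" t I'] eqt by simp
    finally have "emeasure \<mu> {g. act g I \<bullet> t \<in> {c - e <..}} \<noteq> 0" .
    then have "{g. act g I \<bullet> t \<in> {c - e <..}} \<noteq> {}" by (metis emeasure_empty)
    then show ?thesis by auto
  qed
  obtain g0 where g0: "\<forall>y. act y I \<bullet> t \<le> act g0 I \<bullet> t"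
    using continuous_attains_sup[OF cpt _ cont[of I]] by auto
  have ge: "act g0 I \<bullet> t \<ge> c"
  proof (rule ccontr)
    assume "\<not> ?thesis"
    then obtain g where "act g I \<bullet> t > c - (c - act g0 I \<bullet> t)" using approx[of "c - act g0 I \<bullet> t"] by auto
    then have "act g I \<bullet> t > act g0 I \<bullet> t" by simp
    then show False using g0 not_le by blast
  qed
  have "c *\<^sub>R t = (c * (1 / c)) *\<^sub>R I'" unfolding t_def by (rule scaleR_scaleR)
  also have "c * (1 / c) = 1" using c by simp
  finally have It: "I' = c *\<^sub>R t" by simp
  have "act g0 I \<bullet> I' = c * (act g0 I \<bullet> t)"
    using It inner_scaleR_right by metis
  moreover have "c * (act g0 I \<bullet> t) \<ge> c * c" using ge c by (simp add: mult_left_mono)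
  ultimately have "act g0 I \<bullet> I' \<ge> c * c" by simp
  then show ?thesis unfolding c_def by (auto simp: power2_eq_square)
qed

lemma norm_le_from_key:
  fixes \<mu> :: "('g::{topological_ab_group_add,t2_space}) measure"
    and act :: "'g \<Rightarrow> real^'d \<Rightarrow> real^'d"
  assumes cpt: "compact (UNIV :: 'g set)" and H: "normalized_haar \<mu>" and A: "unitary_rep act"
    and P: "Psi \<mu> act I = Psi \<mu> act I'"
  shows "norm I' \<le> norm I"
proof (cases "I' = 0")
  case True then show ?thesis by simp
next
  case False
  obtain g where g: "act g I \<bullet> I' \<ge> norm I' ^ 2" using key[OF cpt H A P False] by blast
  have nr: "norm (act g I) = norm I"
    using A unfolding unitary_rep_def by (simp add: orthogonal_transformation_norm)
  have "norm I' * norm I' \<le> norm I * norm I'"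
    using g Cauchy_Schwarz_ineq2[of "act g I" I'] nr by (simp add: power2_eq_square)
  then show ?thesis using False by simp
qed

theorem theorem3:
  fixes \<mu> :: "('g::{topological_ab_group_add,t2_space}) measure"
    and act :: "'g \<Rightarrow> real^'d \<Rightarrow> real^'d"
  assumes "compact (UNIV :: 'g set)"
    and "normalized_haar \<mu>"
    and "unitary_rep act"
  shows "\<forall>I I'. orbit_equiv act I I' \<longleftrightarrow> Psi \<mu> act I = Psi \<mu> act I'"
proof (intro allI iffI)
  fix I I'
  assume "orbit_equiv act I I'"
  then obtain g where g: "act g I = I'" unfolding orbit_equiv_def by blast
  show "Psi \<mu> act I = Psi \<mu> act I'"
    unfolding Psi_def g[symmetric] orbit_law_shift[OF assms(2,3)] ..
next
  fix I I'
  assume P: "Psi \<mu> act I = Psi \<mu> act I'"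
  have n: "norm I = norm I'"
    using norm_le_from_key[OF assms P] norm_le_from_key[OF assms P[symmetric]] by simp
  have act0: "act 0 = id" using assms(3) unfolding unitary_rep_def by simp
  show "orbit_equiv act I I'"
  proof (cases "I' = 0")
    case True
    then have "I = 0" using n by simp
    then show ?thesis unfolding orbit_equiv_def using True act0 by (intro exI[of _ 0]) simp
  next
    case False
    obtain g where g: "act g I \<bullet> I' \<ge> norm I' ^ 2" using key[OF assms P False] by blast
    have nr: "norm (act g I) = norm I'"
      using assms(3) n unfolding unitary_rep_def by (simp add: orthogonal_transformation_norm)
    have "norm (act g I - I') ^ 2 = norm (act g I) ^ 2 - 2 * (act g I \<bullet> I') + norm I' ^ 2"
      by (simp add: power2_norm_eq_inner inner_diff inner_commute)
    also have "\<dots> \<le> 0" using g nr by simp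
    finally have "act g I = I'" by simp
    then show ?thesis unfolding orbit_equiv_def by blast
  qed
qed

end
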